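(* Let $P,Q,R$ be unary predicate symbols and $S$ a $0$-ary predicate symbol, and let $$\Gamma = \forall x\, \exists y\, (Py \wedge (Qy \rightarrow Rx)) \wedge \neg \forall x\, Rx, \qquad \Delta = \forall x\, (Px \rightarrow (Qx \vee S)) \rightarrow S.$$ Let $\mathcal M=\langle W,\le,v_0,D,\phi\rangle$ be a G-model (interpreting $P$ and $Q$) with base point $v_0$. Then: 1. $v_0\Vdash\exists R\,\Gamma$ if and only if $\mathcal M$ satisfies $I(P,Q)$: for every $w\in W$ there is $a\in D$ with $v_0\Vdash P\mathbf a$ and $w\not\Vdash Q\mathbf a$. 2. $v_0\Vdash\forall S\,\Delta$ if and only if $\mathcal M$ satisfies $J(P,Q)$: for every $w\in W$ there is $a\in D$ with $w\Vdash P\mathbf a$ and $w\not\Vdash Q\mathbf a$.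
   Context: $\neg A$ abbreviates $A\rightarrow\perp$. A G-model is $\mathcal{M}=\langle W,\le,v_0,D,\phi\rangle$: $W$ a nonempty set of states, $\le$ a reflexive transitive relation on $W$, $v_0\in W$ with $v_0\le v$ for all $v\in W$, $D$ a nonempty domain, and for each $k$-ary predicate symbol $P$ a set $\phi(P)\subseteq W\times D^k$ that is monotone: if $v\le w$ and $\langle v,a_1,\dots,a_k\rangle\in\phi(P)$ then $\langle w,a_1,\dots,a_k\rangle\in\phi(P)$. Forcing between states and sentences with constants $\mathbf a$ for elements $a\in D$: $v\Vdash P\mathbf a_1\dots\mathbf a_k$ iff $\langle v,a_1,\dots,a_k\rangle\in\phi(P)$; $\wedge,\vee$ are evaluated pointwise; $v\Vdash A\rightarrow B$ iff for all $w\ge v$, $w\Vdash A$ implies $w\Vdash B$; $\perp$ is never forced; $v\Vdash\exists x A$ iff $v\Vdash A[\mathbf a/x]$ for some $a\in D$; $v\Vdash\forall xA$ iff $v\Vdash A[\mathbf a/x]$ for all $a\in D$. Second-order quantifiers: $v\Vdash\exists R\,A$ iff there is a monotone $R'\subseteq W\times D$ such that $v\Vdash A$ in the model obtained by interpreting $R$ as $R'$; $v\Vdash\forall S\,A$ iff for every upward-closed $S'\subseteq W$, $v\Vdash A$ in the model obtained by interpreting the propositional letter $S$ as $S'$. *)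

theory Defs
  imports Main
begin

datatype 'd trm = V nat | C 'd

datatype ('p, 'd) fm =
    Atom 'p "'d trm list"
  | Bot
  | Conj "('p, 'd) fm" "('p, 'd) fm"
  | Disj "('p, 'd) fm" "('p, 'd) fm"
  | Imp "('p, 'd) fm" "('p, 'd) fm"
  | Ex nat "('p, 'd) fm"
  | All nat "('p, 'd) fm"
  | Ex1 'p "('p, 'd) fm"    \<comment> \<open>second-order \<open>\<exists>R\<close>, \<open>R\<close> unary\<close>
  | All0 'p "('p, 'd) fm"   \<comment> \<open>second-order \<open>\<forall>S\<close>, \<open>S\<close> propositional (0-ary)\<close>

definition Neg :: "('p, 'd) fm \<Rightarrow> ('p, 'd) fm" where
  "Neg A = Imp A Bot"

fun subst_trm :: "nat \<Rightarrow> 'd \<Rightarrow> 'd trm \<Rightarrow> 'd trm" where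
  "subst_trm x a (V y) = (if y = x then C a else V y)"
| "subst_trm x a (C b) = C b"

fun subst :: "nat \<Rightarrow> 'd \<Rightarrow> ('p, 'd) fm \<Rightarrow> ('p, 'd) fm" where
  "subst x a (Atom p ts) = Atom p (map (subst_trm x a) ts)"
| "subst x a Bot = Bot"
| "subst x a (Conj A B) = Conj (subst x a A) (subst x a B)"
| "subst x a (Disj A B) = Disj (subst x a A) (subst x a B)"
| "subst x a (Imp A B) = Imp (subst x a A) (subst x a B)"
| "subst x a (Ex y A) = (if y = x then Ex y A else Ex y (subst x a A))"
| "subst x a (All y A) = (if y = x then All y A else All y (subst x a A))"
| "subst x a (Ex1 p A) = Ex1 p (subst x a A)"
| "subst x a (All0 p A) = All0 p (subst x a A)"

lemma size_subst_trm[simp]: "size (subst_trm x a t) = size t"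
  by (cases t) auto

lemma size_subst[simp]: "size (subst x a A) = size A"
  by (induction A) (auto simp: size_list_conv_sum_list comp_def)

text \<open>A G-model \<open>\<langle>W,\<le>,v\<^sub>0,D,\<phi>\<rangle>\<close>; \<open>\<phi> P \<subseteq> W \<times> D\<^sup>k\<close> with tuples as lists.\<close>
definition gmodel ::
  "'w set \<Rightarrow> ('w \<Rightarrow> 'w \<Rightarrow> bool) \<Rightarrow> 'w \<Rightarrow> 'd set \<Rightarrow> ('p \<Rightarrow> ('w \<times> 'd list) set) \<Rightarrow> bool" where
  "gmodel W le v0 D phi \<longleftrightarrow>
     W \<noteq> {} \<and>
     (\<forall>v\<in>W. le v v) \<and>
     (\<forall>u\<in>W. \<forall>v\<in>W. \<forall>w\<in>W. le u v \<longrightarrow> le v w \<longrightarrow> le u w) \<and>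
     v0 \<in> W \<and> (\<forall>v\<in>W. le v0 v) \<and>
     D \<noteq> {} \<and>
     (\<forall>P. phi P \<subseteq> W \<times> lists D) \<and>
     (\<forall>P v w as. v \<in> W \<longrightarrow> w \<in> W \<longrightarrow> le v w \<longrightarrow> (v, as) \<in> phi P \<longrightarrow> (w, as) \<in> phi P)"

definition mono_rel :: "'w set \<Rightarrow> ('w \<Rightarrow> 'w \<Rightarrow> bool) \<Rightarrow> 'd set \<Rightarrow> ('w \<times> 'd) set \<Rightarrow> bool" where
  "mono_rel W le D R' \<longleftrightarrow> R' \<subseteq> W \<times> D \<and>
     (\<forall>v w a. v \<in> W \<longrightarrow> w \<in> W \<longrightarrow> le v w \<longrightarrow> (v, a) \<in> R' \<longrightarrow> (w, a) \<in> R')"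

definition up_closed :: "'w set \<Rightarrow> ('w \<Rightarrow> 'w \<Rightarrow> bool) \<Rightarrow> 'w set \<Rightarrow> bool" where
  "up_closed W le S' \<longleftrightarrow> S' \<subseteq> W \<and>
     (\<forall>v w. v \<in> W \<longrightarrow> w \<in> W \<longrightarrow> le v w \<longrightarrow> v \<in> S' \<longrightarrow> w \<in> S')"

function forces ::
  "'w set \<Rightarrow> ('w \<Rightarrow> 'w \<Rightarrow> bool) \<Rightarrow> 'd set \<Rightarrow> ('p \<Rightarrow> ('w \<times> 'd list) set)
     \<Rightarrow> 'w \<Rightarrow> ('p, 'd) fm \<Rightarrow> bool" where
  "forces W le D phi v (Atom p ts) = (\<exists>as. ts = map C as \<and> (v, as) \<in> phi p)"
| "forces W le D phi v Bot = False"
| "forces W le D phi v (Conj A B) = (forces W le D phi v A \<and> forces W le D phi v B)"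
| "forces W le D phi v (Disj A B) = (forces W le D phi v A \<or> forces W le D phi v B)"
| "forces W le D phi v (Imp A B) =
     (\<forall>w\<in>W. le v w \<longrightarrow> forces W le D phi w A \<longrightarrow> forces W le D phi w B)"
| "forces W le D phi v (Ex x A) = (\<exists>a\<in>D. forces W le D phi v (subst x a A))"
| "forces W le D phi v (All x A) = (\<forall>a\<in>D. forces W le D phi v (subst x a A))"
| "forces W le D phi v (Ex1 p A) =
     (\<exists>R'. mono_rel W le D R' \<and>
        forces W le D (phi(p := {(w, [a]) | w a. (w, a) \<in> R'})) v A)"
| "forces W le D phi v (All0 p A) =
     (\<forall>S'. up_closed W le S' \<longrightarrow>
        forces W le D (phi(p := {(w, []) | w. w \<in> S'})) v A)"
  by pat_completeness auto
termination by (relation "measure (\<lambda>(_, _, _, _, _, A). size A)") auto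

definition Gamma :: "'p \<Rightarrow> 'p \<Rightarrow> 'p \<Rightarrow> ('p, 'd) fm" where
  "Gamma P Q R =
     Conj (All 0 (Ex 1 (Conj (Atom P [V 1]) (Imp (Atom Q [V 1]) (Atom R [V 0])))))
          (Neg (All 0 (Atom R [V 0])))"

definition Delta :: "'p \<Rightarrow> 'p \<Rightarrow> 'p \<Rightarrow> ('p, 'd) fm" where
  "Delta P Q S =
     Imp (All 0 (Imp (Atom P [V 0]) (Disj (Atom Q [V 0]) (Atom S []))))
         (Atom S [])"

end

theory Submission
  imports Defs
begin
lemma mapC1[simp]: "([C a] = map C as) = (as = [a])" by (cases as) auto
lemma mapC0[simp]: "([] = map C as) = (as = [])" by (cases as) auto
lemma G: "P \<noteq> R \<Longrightarrow> Q \<noteq> R \<Longrightarrow> forces W le D phi v0 (Ex1 R (Gamma P Q R)) = (\<exists>R'. mono_rel W le D R' \<and> (\<forall>a\<in>D. \<exists>b\<in>D. (v0,[b])\<in>phi P \<and> (\<forall>w\<in>W. le v0 w \<longrightarrow> (w,[b])\<in>phi Q \<longrightarrow> (w,a)\<in>R')) \<and> (\<forall>w\<in>W. le v0 w \<longrightarrow> \<not>(\<forall>a\<in>D. (w,a)\<in>R')))"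
  by (simp add: Gamma_def Neg_def)
lemma Dl: "P \<noteq> S \<Longrightarrow> Q \<noteq> S \<Longrightarrow> forces W le D phi v0 (All0 S (Delta P Q S)) \<longleftrightarrow>
     (\<forall>S'. up_closed W le S' \<longrightarrow> (\<forall>w\<in>W. le v0 w \<longrightarrow>
        (\<forall>a\<in>D. \<forall>u\<in>W. le w u \<longrightarrow> (u, [a]) \<in> phi P \<longrightarrow> (u, [a]) \<in> phi Q \<or> u \<in> S') \<longrightarrow> w \<in> S'))"
  by (simp add: Delta_def)

lemma part1:
  assumes g: "gmodel W le v0 D phi" and d: "distinct [P, Q, R, S]"
  shows "forces W le D phi v0 (Ex1 R (Gamma P Q R)) \<longleftrightarrow>
            (\<forall>w\<in>W. \<exists>a\<in>D. forces W le D phi v0 (Atom P [C a]) \<and>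
                            \<not> forces W le D phi w (Atom Q [C a]))"
proof -
  note gm = g[unfolded gmodel_def]
  have v0W: "v0 \<in> W" using gm by (elim conjE) assumption
  have v0le: "\<forall>v\<in>W. le v0 v" using gm by (elim conjE) assumption
  have mono: "\<forall>P v w as. v \<in> W \<longrightarrow> w \<in> W \<longrightarrow> le v w \<longrightarrow> (v, as) \<in> phi P \<longrightarrow> (w, as) \<in> phi P"
    using gm by (elim conjE) assumption
  from d have PR: "P \<noteq> R" and QR: "Q \<noteq> R" by auto
  show ?thesis
  proof
    assume H: "forces W le D phi v0 (Ex1 R (Gamma P Q R))"
    have ex: "\<exists>R'. mono_rel W le D R' \<and> (\<forall>a\<in>D. \<exists>b\<in>D. (v0,[b])\<in>phi P \<and> (\<forall>w\<in>W. le v0 w \<longrightarrow> (w,[b])\<in>phi Q \<longrightarrow> (w,a)\<in>R')) \<and> (\<forall>w\<in>W. le v0 w \<longrightarrow> \<not>(\<forall>a\<in>D. (w,a)\<in>R'))"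
      using H unfolding G[OF PR QR] .
    then obtain R' where R': "mono_rel W le D R' \<and> (\<forall>a\<in>D. \<exists>b\<in>D. (v0,[b])\<in>phi P \<and> (\<forall>w\<in>W. le v0 w \<longrightarrow> (w,[b])\<in>phi Q \<longrightarrow> (w,a)\<in>R')) \<and> (\<forall>w\<in>W. le v0 w \<longrightarrow> \<not>(\<forall>a\<in>D. (w,a)\<in>R'))" ..
    note h1 = R'[THEN conjunct2, THEN conjunct1]
    note h2 = R'[THEN conjunct2, THEN conjunct2]
    show "\<forall>w\<in>W. \<exists>a\<in>D. forces W le D phi v0 (Atom P [C a]) \<and>
                            \<not> forces W le D phi w (Atom Q [C a])"
    proof
      fix w assume w: "w \<in> W"
      have lw: "le v0 w" using v0le w by simp
      have "\<not> (\<forall>a\<in>D. (w, a) \<in> R')" using h2 w lw by simp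
      then obtain a where a: "a \<in> D" "(w, a) \<notin> R'" by blast
      from h1 a(1) obtain b where b: "b \<in> D" "(v0, [b]) \<in> phi P"
        "\<forall>w\<in>W. le v0 w \<longrightarrow> (w, [b]) \<in> phi Q \<longrightarrow> (w, a) \<in> R'" by blast
      have "(w, [b]) \<notin> phi Q"
      proof
        assume "(w, [b]) \<in> phi Q"
        then have "(w, a) \<in> R'" using b(3) w lw by simp
        then show False using a(2) by simp
      qed
      then show "\<exists>a\<in>D. forces W le D phi v0 (Atom P [C a]) \<and>
                            \<not> forces W le D phi w (Atom Q [C a])"
        using b by (intro bexI[of _ b]) auto
    qed
  next
    assume I: "\<forall>w\<in>W. \<exists>a\<in>D. forces W le D phi v0 (Atom P [C a]) \<and>
                            \<not> forces W le D phi w (Atom Q [C a])"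
    hence I': "\<forall>w\<in>W. \<exists>a\<in>D. (v0, [a]) \<in> phi P \<and> (w, [a]) \<notin> phi Q" by simp
    define R' where "R' = {(w, a). w \<in> W \<and> a \<in> D \<and> ((v0, [a]) \<in> phi P \<longrightarrow> (w, [a]) \<in> phi Q)}"
    have mr: "mono_rel W le D R'"
      unfolding mono_rel_def
    proof (intro conjI allI impI)
      show "R' \<subseteq> W \<times> D" by (auto simp: R'_def)
    next
      fix v w a assume v: "v \<in> W" and w: "w \<in> W" and vw: "le v w" and va: "(v, a) \<in> R'"
      have "(v0, [a]) \<in> phi P \<longrightarrow> (v, [a]) \<in> phi Q" "a \<in> D" using va by (auto simp: R'_def)
      moreover have "(v, [a]) \<in> phi Q \<Longrightarrow> (w, [a]) \<in> phi Q"
        by (rule mono[rule_format, OF v w vw])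
      ultimately show "(w, a) \<in> R'" using w by (auto simp: R'_def)
    qed
    have "\<exists>a\<in>D. (v0, [a]) \<in> phi P \<and> (v0, [a]) \<notin> phi Q" using I' v0W by simp
    then obtain b0 where b0: "b0 \<in> D" "(v0, [b0]) \<in> phi P" by blast
    have h1: "\<forall>a\<in>D. \<exists>b\<in>D. (v0, [b]) \<in> phi P \<and>
          (\<forall>w\<in>W. le v0 w \<longrightarrow> (w, [b]) \<in> phi Q \<longrightarrow> (w, a) \<in> R')"
    proof
      fix a assume a: "a \<in> D"
      show "\<exists>b\<in>D. (v0, [b]) \<in> phi P \<and>
          (\<forall>w\<in>W. le v0 w \<longrightarrow> (w, [b]) \<in> phi Q \<longrightarrow> (w, a) \<in> R')"
      proof (cases "(v0, [a]) \<in> phi P")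
        case True
        then show ?thesis using a by (intro bexI[of _ a]) (auto simp: R'_def)
      next
        case False
        then show ?thesis using a b0 by (intro bexI[of _ b0]) (auto simp: R'_def)
      qed
    qed
    have h2: "\<forall>w\<in>W. le v0 w \<longrightarrow> \<not> (\<forall>a\<in>D. (w, a) \<in> R')"
    proof (intro ballI impI notI)
      fix w assume w: "w \<in> W" and all: "\<forall>a\<in>D. (w, a) \<in> R'"
      from I' w obtain a where a: "a \<in> D" "(v0, [a]) \<in> phi P" "(w, [a]) \<notin> phi Q" by blast
      from all a(1) have "(w, a) \<in> R'" by simp
      then show False using a by (simp add: R'_def)
    qed
    show "forces W le D phi v0 (Ex1 R (Gamma P Q R))"
      unfolding G[OF PR QR] by (rule exI[of _ R']) (intro conjI mr h1 h2)
  qed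
qed

lemma part2:
  assumes g: "gmodel W le v0 D phi" and d: "distinct [P, Q, R, S]"
  shows "forces W le D phi v0 (All0 S (Delta P Q S)) \<longleftrightarrow>
            (\<forall>w\<in>W. \<exists>a\<in>D. forces W le D phi w (Atom P [C a]) \<and>
                            \<not> forces W le D phi w (Atom Q [C a]))"
proof -
  note gm = g[unfolded gmodel_def]
  have refl: "\<forall>v\<in>W. le v v" using gm by (elim conjE) assumption
  have v0le: "\<forall>v\<in>W. le v0 v" using gm by (elim conjE) assumption
  have tr: "\<forall>u\<in>W. \<forall>v\<in>W. \<forall>w\<in>W. le u v \<longrightarrow> le v w \<longrightarrow> le u w" using gm by (elim conjE) assumption
  have mono: "\<forall>P v w as. v \<in> W \<longrightarrow> w \<in> W \<longrightarrow> le v w \<longrightarrow> (v, as) \<in> phi P \<longrightarrow> (w, as) \<in> phi P"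
    using gm by (elim conjE) assumption
  from d have PS: "P \<noteq> S" and QS: "Q \<noteq> S" by auto
  have F: "forces W le D phi v0 (All0 S (Delta P Q S)) \<longleftrightarrow>
     (\<forall>S'. up_closed W le S' \<longrightarrow> (\<forall>w\<in>W. le v0 w \<longrightarrow>
        (\<forall>a\<in>D. \<forall>u\<in>W. le w u \<longrightarrow> (u, [a]) \<in> phi P \<longrightarrow> (u, [a]) \<in> phi Q \<or> u \<in> S') \<longrightarrow> w \<in> S'))"
    using Dl[OF PS QS] .
  show ?thesis
  proof
    assume "forces W le D phi v0 (All0 S (Delta P Q S))"
    hence H: "\<forall>S'. up_closed W le S' \<longrightarrow> (\<forall>w\<in>W. le v0 w \<longrightarrow>
        (\<forall>a\<in>D. \<forall>u\<in>W. le w u \<longrightarrow> (u, [a]) \<in> phi P \<longrightarrow> (u, [a]) \<in> phi Q \<or> u \<in> S') \<longrightarrow> w \<in> S')"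
      unfolding F .
    show "\<forall>w\<in>W. \<exists>a\<in>D. forces W le D phi w (Atom P [C a]) \<and>
                            \<not> forces W le D phi w (Atom Q [C a])"
    proof
      fix w assume w: "w \<in> W"
      define S' where "S' = {u \<in> W. \<not> le u w}"
      have uc: "up_closed W le S'" unfolding up_closed_def
      proof (intro conjI allI impI)
        show "S' \<subseteq> W" by (auto simp: S'_def)
      next
        fix v x assume v: "v \<in> W" and x: "x \<in> W" and vx: "le v x" and vS: "v \<in> S'"
        show "x \<in> S'"
        proof (rule ccontr)
          assume "x \<notin> S'"
          then have "le x w" using x by (simp add: S'_def)
          then have "le v w" using tr v x w vx by blast
          then show False using vS by (simp add: S'_def)
        qed
      qed
      have "w \<notin> S'" using refl w by (simp add: S'_def)
      have lw: "le v0 w" using v0le w by simp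
      have "\<not> (\<forall>a\<in>D. \<forall>u\<in>W. le w u \<longrightarrow> (u, [a]) \<in> phi P \<longrightarrow> (u, [a]) \<in> phi Q \<or> u \<in> S')"
      proof
        assume "\<forall>a\<in>D. \<forall>u\<in>W. le w u \<longrightarrow> (u, [a]) \<in> phi P \<longrightarrow> (u, [a]) \<in> phi Q \<or> u \<in> S'"
        then have "w \<in> S'" using H uc w lw by blast
        then show False using \<open>w \<notin> S'\<close> by simp
      qed
      then obtain a u where au: "a \<in> D" "u \<in> W" "le w u" "(u, [a]) \<in> phi P"
        "(u, [a]) \<notin> phi Q" "u \<notin> S'" by blast
      hence "le u w" by (simp add: S'_def)
      have "(w, [a]) \<in> phi P" by (rule mono[rule_format, OF au(2) w \<open>le u w\<close> au(4)])
      moreover have "(w, [a]) \<notin> phi Q"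
      proof
        assume "(w, [a]) \<in> phi Q"
        then have "(u, [a]) \<in> phi Q" by (rule mono[rule_format, OF w au(2) au(3)])
        then show False using au(5) by simp
      qed
      ultimately show "\<exists>a\<in>D. forces W le D phi w (Atom P [C a]) \<and>
                            \<not> forces W le D phi w (Atom Q [C a])"
        using au by (intro bexI[of _ a]) auto
    qed
  next
    assume J: "\<forall>w\<in>W. \<exists>a\<in>D. forces W le D phi w (Atom P [C a]) \<and>
                            \<not> forces W le D phi w (Atom Q [C a])"
    hence J': "\<forall>w\<in>W. \<exists>a\<in>D. (w, [a]) \<in> phi P \<and> (w, [a]) \<notin> phi Q" by simp
    have "\<forall>S'. up_closed W le S' \<longrightarrow> (\<forall>w\<in>W. le v0 w \<longrightarrow>
        (\<forall>a\<in>D. \<forall>u\<in>W. le w u \<longrightarrow> (u, [a]) \<in> phi P \<longrightarrow> (u, [a]) \<in> phi Q \<or> u \<in> S') \<longrightarrow> w \<in> S')"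
    proof (intro allI impI ballI)
      fix S' w assume w: "w \<in> W"
        and h: "\<forall>a\<in>D. \<forall>u\<in>W. le w u \<longrightarrow> (u, [a]) \<in> phi P \<longrightarrow> (u, [a]) \<in> phi Q \<or> u \<in> S'"
      obtain a where "a \<in> D" "(w, [a]) \<in> phi P" "(w, [a]) \<notin> phi Q" using J' w by blast
      moreover have "le w w" using refl w by simp
      ultimately show "w \<in> S'" using h w by blast
    qed
    thus "forces W le D phi v0 (All0 S (Delta P Q S))" unfolding F .
  qed
qed

theorem lemma3p2:
  fixes W :: "'w set" and le :: "'w \<Rightarrow> 'w \<Rightarrow> bool" and v0 :: 'w
    and D :: "'d set" and phi :: "'p \<Rightarrow> ('w \<times> 'd list) set"
    and P Q R S :: 'p
  assumes "gmodel W le v0 D phi"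
    and "distinct [P, Q, R, S]"
  shows "(forces W le D phi v0 (Ex1 R (Gamma P Q R)) \<longleftrightarrow>
            (\<forall>w\<in>W. \<exists>a\<in>D. forces W le D phi v0 (Atom P [C a]) \<and>
                            \<not> forces W le D phi w (Atom Q [C a])))
       \<and> (forces W le D phi v0 (All0 S (Delta P Q S)) \<longleftrightarrow>
            (\<forall>w\<in>W. \<exists>a\<in>D. forces W le D phi w (Atom P [C a]) \<and>
                            \<not> forces W le D phi w (Atom Q [C a])))"
  using part1[OF assms] part2[OF assms] by blast

end
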